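(* Let $\mathfrak S$ be a commutative Noetherian semiring. Then for every set $\sigma_{\mathfrak S}$ of ideals of $\mathfrak S$, the space $\sigma_{\mathfrak S}$ with the ideal topology is a Noetherian topological space.
   Context: A semiring $(\mathfrak S,+,0,\cdot,1)$ has $(\mathfrak S,+,0)$ a commutative monoid, $(\mathfrak S,\cdot,1)$ a monoid, $0r=r0=0$, and two-sided distributivity; all semirings are commutative. An ideal is a nonempty proper subset closed under addition and under multiplication by elements of $\mathfrak S$. Noetherian semiring: every ideal is finitely generated. For an ideal $\mathfrak a$, $\mathfrak a^{\uparrow}=\{\mathfrak x\in\sigma_{\mathfrak S}\mid\mathfrak a\subseteq\mathfrak x\}$; the ideal topology on $\sigma_{\mathfrak S}$ has the sets $\mathfrak a^{\uparrow}$ ($\mathfrak a$ any ideal) as a subbasis of closed sets. A Noetherian topological space is one satisfying the descending chain condition on closed subsets. *)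

theory Defs
  imports "HOL-Analysis.Analysis"
begin

definition semiring_ideal :: "'a::comm_semiring_1 set \<Rightarrow> bool" where
  "semiring_ideal I \<longleftrightarrow> I \<noteq> {} \<and> I \<noteq> UNIV
     \<and> (\<forall>x\<in>I. \<forall>y\<in>I. x + y \<in> I)
     \<and> (\<forall>r x. x \<in> I \<longrightarrow> r * x \<in> I)"

definition gen_ideal :: "'a::comm_semiring_1 set \<Rightarrow> 'a set" where
  "gen_ideal F = {(\<Sum>f\<in>F. r f * f) | r. True}"

definition finitely_generated_ideal :: "'a::comm_semiring_1 set \<Rightarrow> bool" where
  "finitely_generated_ideal I \<longleftrightarrow> (\<exists>F. finite F \<and> F \<subseteq> I \<and> I = gen_ideal F)"

definition noetherian_semiring :: "'a::comm_semiring_1 itself \<Rightarrow> bool" where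
  "noetherian_semiring TYPE('a) \<longleftrightarrow>
     (\<forall>I :: 'a set. semiring_ideal I \<longrightarrow> finitely_generated_ideal I)"

definition up_set :: "'a set set \<Rightarrow> 'a set \<Rightarrow> 'a set set" where
  "up_set \<sigma> a = {x \<in> \<sigma>. a \<subseteq> x}"

text \<open>Ideal topology on \<sigma>: the sets \<open>a\<up>\<close> (a any ideal) form a subbasis of
  closed sets; equivalently their complements in \<sigma> (together with \<sigma>)
  form a subbasis of open sets.\<close>
definition ideal_topology :: "'a::comm_semiring_1 set set \<Rightarrow> 'a set topology" where
  "ideal_topology \<sigma> =
     topology_generated_by (insert \<sigma> {\<sigma> - up_set \<sigma> a | a. semiring_ideal a})"

definition noetherian_space :: "'a topology \<Rightarrow> bool" where
  "noetherian_space X \<longleftrightarrow>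
     (\<forall>C :: nat \<Rightarrow> 'a set. (\<forall>n. closedin X (C n)) \<and> (\<forall>n. C (Suc n) \<subseteq> C n)
        \<longrightarrow> (\<exists>N. \<forall>n\<ge>N. C n = C N))"

end

theory Submission
  imports Defs "HOL-Library.Multiset"
begin


lemma ideal_mult: "semiring_ideal I \<Longrightarrow> x \<in> I \<Longrightarrow> r * x \<in> I"
  unfolding semiring_ideal_def by blast

lemma ideal_add: "semiring_ideal I \<Longrightarrow> x \<in> I \<Longrightarrow> y \<in> I \<Longrightarrow> x + y \<in> I"
  unfolding semiring_ideal_def by blast

lemma ideal_zero: "semiring_ideal (x::'a::comm_semiring_1 set) \<Longrightarrow> 0 \<in> x"
proof -
  assume a: "semiring_ideal x"
  then obtain y where "y \<in> x" unfolding semiring_ideal_def by blast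
  from ideal_mult[OF a this, of 0] show ?thesis by simp
qed

lemma ideal_sum: assumes "semiring_ideal (x::'a::comm_semiring_1 set)" "finite F"
  "\<And>f. f \<in> F \<Longrightarrow> g f \<in> x" shows "(\<Sum>f\<in>F. g f) \<in> x"
  using assms(2,3)
proof (induction F rule: finite_induct)
  case empty then show ?case using ideal_zero[OF assms(1)] by simp
next
  case (insert a F) then show ?case using ideal_add[OF assms(1)] by simp
qed

lemma gen_ideal_sub: assumes "semiring_ideal (x::'a::comm_semiring_1 set)" "finite F" "F \<subseteq> x"
  shows "gen_ideal F \<subseteq> x"
proof
  fix y assume "y \<in> gen_ideal F"
  then obtain r where y: "y = (\<Sum>f\<in>F. r f * f)" unfolding gen_ideal_def by blast
  show "y \<in> x" unfolding y
  proof (rule ideal_sum[OF assms(1,2)])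
    fix f assume "f \<in> F"
    then have "f \<in> x" using assms(3) by blast
    then show "r f * f \<in> x" by (rule ideal_mult[OF assms(1)])
  qed
qed

lemma gen_self: assumes "finite (F::'a::comm_semiring_1 set)" shows "F \<subseteq> gen_ideal F"
proof
  fix g assume g: "g \<in> F"
  have e: "(\<Sum>f\<in>F. (if f = g then 1 else 0) * f) = g"
  proof -
    have "(\<Sum>f\<in>F. (if f = g then 1 else 0) * f) = (\<Sum>f\<in>F. if f = g then f else 0)"
      by (rule sum.cong) simp_all
    also have "\<dots> = g" using assms g by (simp only: sum.delta) simp
    finally show ?thesis .
  qed
  show "g \<in> gen_ideal F" unfolding gen_ideal_def mem_Collect_eq
    by (rule exI[of _ "\<lambda>f. if f = g then 1 else 0"]) (simp only: e simp_thms)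
qed

lemma gen_ideal_ideal: assumes "finite (F::'a::comm_semiring_1 set)" "gen_ideal F \<noteq> UNIV"
  shows "semiring_ideal (gen_ideal F)"
  unfolding semiring_ideal_def
proof (intro conjI ballI allI impI)
  show "gen_ideal F \<noteq> {}" unfolding gen_ideal_def by blast
  show "gen_ideal F \<noteq> UNIV" by fact
next
  fix x y assume "x \<in> gen_ideal F" "y \<in> gen_ideal F"
  then obtain r s where "x = (\<Sum>f\<in>F. r f * f)" "y = (\<Sum>f\<in>F. s f * f)" unfolding gen_ideal_def by blast
  then have "x + y = (\<Sum>f\<in>F. (r f + s f) * f)" by (simp add: sum.distrib distrib_right)
  then show "x + y \<in> gen_ideal F" unfolding gen_ideal_def mem_Collect_eq by (intro exI[of _ "\<lambda>f. r f + s f"]) simp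
next
  fix c x assume "x \<in> gen_ideal F"
  then obtain r where "x = (\<Sum>f\<in>F. r f * f)" unfolding gen_ideal_def by blast
  then have "c * x = (\<Sum>f\<in>F. (c * r f) * f)" by (simp add: sum_distrib_left mult.assoc)
  then show "c * x \<in> gen_ideal F" unfolding gen_ideal_def mem_Collect_eq by (intro exI[of _ "\<lambda>f. c * r f"]) simp
qed

lemma gen_mono: assumes "finite (H::'a::comm_semiring_1 set)" "G \<subseteq> H"
  shows "gen_ideal G \<subseteq> gen_ideal H"
proof (cases "gen_ideal H = UNIV")
  case False
  have fG: "finite G" using assms finite_subset by blast
  show ?thesis using gen_ideal_sub[OF gen_ideal_ideal[OF assms(1) False] fG] gen_self[OF assms(1)] assms(2) by blast
qed simp

definition Gens :: "'a::comm_semiring_1 set set" where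
  "Gens = gen_ideal ` {F. finite F}"

definition relG :: "('a::comm_semiring_1 set \<times> 'a set) set" where
  "relG = {(J, I). I \<subset> J \<and> I \<in> Gens \<and> J \<in> Gens}"

lemma wf_relG: assumes noeth: "noetherian_semiring TYPE('a::comm_semiring_1)"
  shows "wf (relG :: ('a set \<times> 'a set) set)"
  unfolding wf_iff_no_infinite_down_chain
proof
  assume "\<exists>f. \<forall>i. (f (Suc i), f i) \<in> (relG :: ('a set \<times> 'a set) set)"
  then obtain f :: "nat \<Rightarrow> 'a set" where f: "\<And>i. (f (Suc i), f i) \<in> relG" by blast
  have lt: "f i \<subset> f (Suc i)" for i using f[of i] unfolding relG_def by auto
  have nU: "f i \<noteq> UNIV" for i using lt[of i] by auto
  have id: "semiring_ideal (f i)" for i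
  proof -
    obtain F where "finite F" "f i = gen_ideal F" using f[of i] unfolding relG_def Gens_def by auto
    then show ?thesis using gen_ideal_ideal[of F] nU[of i] by simp
  qed
  have mono: "f i \<subseteq> f j" if "i \<le> j" for i j
    by (rule lift_Suc_mono_le[of f, OF _ that]) (use lt in blast)
  define U where "U = \<Union>(range f)"
  have one: "1 \<notin> f i" for i
  proof
    assume "1 \<in> f i"
    then have "\<forall>r. r * 1 \<in> f i" using id[of i] unfolding semiring_ideal_def by blast
    then show False using nU[of i] by auto
  qed
  have "semiring_ideal U" unfolding semiring_ideal_def
  proof (intro conjI ballI allI impI)
    show "U \<noteq> {}" unfolding U_def using ideal_zero[OF id[of 0]] by blast
    show "U \<noteq> UNIV" unfolding U_def using one by blast
  next
    fix x y assume "x \<in> U" "y \<in> U"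
    then obtain i j where "x \<in> f i" "y \<in> f j" unfolding U_def by blast
    then have "x \<in> f (max i j)" "y \<in> f (max i j)" using mono[of i "max i j"] mono[of j "max i j"] by auto
    then have "x + y \<in> f (max i j)" using id[of "max i j"] unfolding semiring_ideal_def by simp
    then show "x + y \<in> U" unfolding U_def by blast
  next
    fix r x assume "x \<in> U"
    then obtain i where "x \<in> f i" unfolding U_def by blast
    then have "r * x \<in> f i" using id[of i] unfolding semiring_ideal_def by simp
    then show "r * x \<in> U" unfolding U_def by blast
  qed
  then obtain F where F: "finite F" "F \<subseteq> U" "U = gen_ideal F"
    using noeth unfolding noetherian_semiring_def finitely_generated_ideal_def by blast
  have "\<forall>x\<in>F. \<exists>i. x \<in> f i" using F(2) unfolding U_def by blast
  then obtain ix where ix: "\<And>x. x \<in> F \<Longrightarrow> x \<in> f (ix x)" by metis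
  define N where "N = Max (insert 0 (ix ` F))"
  have "F \<subseteq> f N"
  proof
    fix x assume "x \<in> F"
    then have "ix x \<le> N" unfolding N_def using F(1) by simp
    then show "x \<in> f N" using ix[OF \<open>x \<in> F\<close>] mono[OF \<open>ix x \<le> N\<close>] by blast
  qed
  then have "U \<subseteq> f N" using F gen_ideal_sub[OF id[of N]] by simp
  moreover have "f (Suc N) \<subseteq> U" unfolding U_def by blast
  ultimately show False using lt[of N] by blast
qed



definition FU :: "'b set set \<Rightarrow> 'b set set" where
  "FU B = {\<Union>A | A. finite A \<and> A \<subseteq> B}"

definition relS :: "'b set set \<Rightarrow> ('b set \<times> 'b set) set" where
  "relS B = {(X, Y). X \<in> B \<and> Y \<in> B \<and> X \<subset> Y}"

lemma FU_Int: assumes Bint: "\<And>X Y. X \<in> B \<Longrightarrow> Y \<in> B \<Longrightarrow> X \<inter> Y \<in> B"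
  and "X \<in> FU B" "Y \<in> FU B" shows "X \<inter> Y \<in> FU B"
proof -
  obtain A1 A2 where A: "finite A1" "A1 \<subseteq> B" "X = \<Union>A1" "finite A2" "A2 \<subseteq> B" "Y = \<Union>A2"
    using assms(2,3) unfolding FU_def by blast
  have fin: "finite {a \<inter> b | a b. a \<in> A1 \<and> b \<in> A2}"
    using finite_image_set2[OF _ _, of "\<lambda>a. a \<in> A1" "\<lambda>b. b \<in> A2" "(\<inter>)"] A by simp
  have sub: "{a \<inter> b | a b. a \<in> A1 \<and> b \<in> A2} \<subseteq> B" using A Bint by blast
  have "X \<inter> Y = \<Union>{a \<inter> b | a b. a \<in> A1 \<and> b \<in> A2}" using A by blast
  then show ?thesis unfolding FU_def using fin sub by blast
qed

lemma FU_Un: "X \<in> FU B \<Longrightarrow> Y \<in> FU B \<Longrightarrow> X \<union> Y \<in> FU B"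
proof -
  assume "X \<in> FU B" "Y \<in> FU B"
  then obtain A1 A2 where A: "finite A1" "A1 \<subseteq> B" "X = \<Union>A1" "finite A2" "A2 \<subseteq> B" "Y = \<Union>A2"
    unfolding FU_def by blast
  then have "X \<union> Y = \<Union>(A1 \<union> A2)" "finite (A1 \<union> A2)" "A1 \<union> A2 \<subseteq> B" by auto
  then show ?thesis unfolding FU_def by blast
qed

lemma wf_FU: assumes wfB: "wf (relS B)"
  and Bint: "\<And>X Y. X \<in> B \<Longrightarrow> Y \<in> B \<Longrightarrow> X \<inter> Y \<in> B"
  shows "wf (relS (FU B))"
proof -
  have main: "set_mset M \<subseteq> B \<longrightarrow> \<Union>(set_mset M) \<in> Wellfounded.acc (relS (FU B))" for M
    using wf_mult[OF wfB]
  proof (induction M rule: wf_induct_rule)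
    case (less M)
    show ?case
    proof
      assume MB: "set_mset M \<subseteq> B"
      show "\<Union>(set_mset M) \<in> Wellfounded.acc (relS (FU B))"
      proof (rule accI)
        fix U assume "(U, \<Union>(set_mset M)) \<in> relS (FU B)"
        then have UF: "U \<in> FU B" and lt: "U \<subset> \<Union>(set_mset M)" unfolding relS_def by simp_all
        from UF obtain K where K: "finite K" "K \<subseteq> B" "U = \<Union>K" unfolding FU_def by blast
        define I where "I = filter_mset (\<lambda>X. X \<subseteq> U) M"
        define J where "J = filter_mset (\<lambda>X. \<not> X \<subseteq> U) M"
        define KS where "KS = {X \<inter> C | X C. X \<in># J \<and> C \<in> K}"
        define K' where "K' = mset_set KS"
        have finKS: "finite KS" unfolding KS_def
          using finite_image_set2[of "\<lambda>X. X \<in># J" "\<lambda>C. C \<in> K" "(\<inter>)"] K(1) by simp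
        then have sK': "set_mset K' = KS" unfolding K'_def by simp
        have M: "M = I + J" unfolding I_def J_def by (rule multiset_partition)
        have "J \<noteq> {#}"
        proof
          assume "J = {#}"
          then have "M = I" using M by simp
          then have "\<Union>(set_mset M) \<subseteq> U" unfolding I_def by (metis Union_least set_mset_filter mem_Collect_eq)
          then show False using lt by blast
        qed
        moreover have "\<forall>k \<in> set_mset K'. \<exists>j \<in> set_mset J. (k, j) \<in> relS B"
        proof
          fix k assume "k \<in> set_mset K'"
          then obtain X C where k: "k = X \<inter> C" "X \<in># J" "C \<in> K" using sK' unfolding KS_def by blast
          have XB: "X \<in> B" using k(2) MB unfolding J_def by auto
          have nX: "\<not> X \<subseteq> U" using k(2) unfolding J_def by auto
          have CU: "C \<subseteq> U" using k(3) K(3) by blast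
          have "k \<in> B" using Bint[OF XB] k K(2) by blast
          moreover have "k \<subset> X" using k nX CU by blast
          ultimately show "\<exists>j \<in> set_mset J. (k, j) \<in> relS B" using k(2) XB unfolding relS_def by blast
        qed
        ultimately have "(I + K', I + J) \<in> mult (relS B)" by (rule one_step_implies_mult)
        then have rel: "(I + K', M) \<in> mult (relS B)" using M by simp
        have sub: "set_mset (I + K') \<subseteq> B"
        proof -
          have "set_mset I \<subseteq> B" using MB unfolding I_def by auto
          moreover have "KS \<subseteq> B"
          proof
            fix k assume "k \<in> KS"
            then obtain X C where k: "k = X \<inter> C" "X \<in># J" "C \<in> K" unfolding KS_def by blast
            have XB: "X \<in> B" using k(2) MB unfolding J_def by auto
            show "k \<in> B" using Bint[OF XB] k K(2) by blast
          qed
          ultimately show ?thesis using sK' by simp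
        qed
        have eq: "\<Union>(set_mset (I + K')) = U"
        proof
          show "\<Union>(set_mset (I + K')) \<subseteq> U"
          proof -
            have "\<Union>(set_mset I) \<subseteq> U" unfolding I_def by auto
            moreover have "\<Union>KS \<subseteq> U"
            proof (rule Union_least)
              fix k assume "k \<in> KS"
              then obtain X C where k: "k = X \<inter> C" "C \<in> K" unfolding KS_def by blast
              then show "k \<subseteq> U" using K(3) by blast
            qed
            ultimately show ?thesis using sK' by simp
          qed
        next
          show "U \<subseteq> \<Union>(set_mset (I + K'))"
          proof
            fix u assume u: "u \<in> U"
            then obtain X where X: "X \<in># M" "u \<in> X" using lt by blast
            show "u \<in> \<Union>(set_mset (I + K'))"
            proof (cases "X \<subseteq> U")
              case True
              then have "X \<in># I" unfolding I_def using X by simp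
              then show ?thesis using X(2) by (intro UnionI[of X]) simp_all
            next
              case False
              then have XJ: "X \<in># J" unfolding J_def using X by simp
              obtain C where C: "C \<in> K" "u \<in> C" using u K(3) by blast
              have "X \<inter> C \<in> KS" unfolding KS_def using XJ C by blast
              then show ?thesis using sK' X(2) C(2) by (intro UnionI[of "X \<inter> C"]) simp_all
            qed
          qed
        qed
        show "U \<in> Wellfounded.acc (relS (FU B))"
          using less.IH[OF rel] sub eq by simp
      qed
    qed
  qed
  show ?thesis
  proof (rule acc_wfI, intro allI)
    fix X
    show "X \<in> Wellfounded.acc (relS (FU B))"
    proof (cases "X \<in> FU B")
      case True
      then obtain A where A: "finite A" "A \<subseteq> B" "X = \<Union>A" unfolding FU_def by blast
      then show ?thesis using main[of "mset_set A"] by simp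
    next
      case False
      show ?thesis by (rule accI) (use False in \<open>auto simp: relS_def\<close>)
    qed
  qed
qed

lemma FU_Inter: assumes wfU: "wf (relS (FU B))"
  and Bint: "\<And>X Y. X \<in> B \<Longrightarrow> Y \<in> B \<Longrightarrow> X \<inter> Y \<in> B"
  and sub: "AA \<subseteq> FU B" and ne: "AA \<noteq> {}"
  shows "\<Inter>AA \<in> FU B"
proof -
  define Q where "Q = {\<Inter>FF | FF. finite FF \<and> FF \<noteq> {} \<and> FF \<subseteq> AA}"
  have QU: "\<Inter>FF \<in> FU B" if "finite FF" "FF \<noteq> {}" "FF \<subseteq> AA" for FF
    using that
  proof (induction FF rule: finite_ne_induct)
    case (singleton x) then show ?case using sub by auto
  next
    case (insert x F) then show ?case using FU_Int[OF Bint] sub by auto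
  qed
  obtain a where a: "a \<in> AA" using ne by blast
  have "\<Inter>{a} \<in> Q" unfolding Q_def using a by blast
  then obtain z where z: "z \<in> Q" and zmin: "\<And>y. (y, z) \<in> relS (FU B) \<Longrightarrow> y \<notin> Q"
    using wfE_min[OF wfU] by metis
  obtain FF where FF: "finite FF" "FF \<noteq> {}" "FF \<subseteq> AA" "z = \<Inter>FF" using z unfolding Q_def by blast
  have "z \<subseteq> A" if A: "A \<in> AA" for A
  proof (rule ccontr)
    assume nz: "\<not> z \<subseteq> A"
    have "\<Inter>(insert A FF) \<in> Q" unfolding Q_def using FF A by blast
    moreover have "(\<Inter>(insert A FF), z) \<in> relS (FU B)"
      unfolding relS_def using QU[of "insert A FF"] QU[OF FF(1-3)] FF A nz by auto
    ultimately show False using zmin by blast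
  qed
  then have "z = \<Inter>AA" using FF by blast
  then show ?thesis using QU[OF FF(1-3)] FF by simp
qed



definition TT :: "'a set set \<Rightarrow> 'a set \<Rightarrow> 'a set set" where
  "TT \<sigma> F = {x \<in> \<sigma>. F \<subseteq> x}"

definition Bs :: "'a set set \<Rightarrow> 'a set set set" where
  "Bs \<sigma> = {TT \<sigma> F | F. finite F}"

lemma TT_Un: "TT \<sigma> (F \<union> G) = TT \<sigma> F \<inter> TT \<sigma> G"
  unfolding TT_def by blast

lemma Bs_Int: "X \<in> Bs \<sigma> \<Longrightarrow> Y \<in> Bs \<sigma> \<Longrightarrow> X \<inter> Y \<in> Bs \<sigma>"
proof -
  assume "X \<in> Bs \<sigma>" "Y \<in> Bs \<sigma>"
  then obtain F G where "finite F" "finite G" "X = TT \<sigma> F" "Y = TT \<sigma> G" unfolding Bs_def by blast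
  then have "X \<inter> Y = TT \<sigma> (F \<union> G)" "finite (F \<union> G)" using TT_Un by auto
  then show ?thesis unfolding Bs_def by blast
qed

lemma TT_key:
  fixes \<sigma> :: "'a::comm_semiring_1 set set"
  assumes ids: "\<forall>x\<in>\<sigma>. semiring_ideal x" and F: "finite F" and G: "finite G"
    and lt: "TT \<sigma> F \<subset> TT \<sigma> G"
  shows "(gen_ideal (F \<union> G), gen_ideal G) \<in> relG" "TT \<sigma> (F \<union> G) = TT \<sigma> F"
proof -
  show "TT \<sigma> (F \<union> G) = TT \<sigma> F" using lt TT_Un[of \<sigma> F G] by blast
  have fFG: "finite (F \<union> G)" using F G by simp
  have sub: "gen_ideal G \<subseteq> gen_ideal (F \<union> G)" by (rule gen_mono[OF fFG]) blast
  have ne: "gen_ideal G \<noteq> gen_ideal (F \<union> G)"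
  proof
    assume eq: "gen_ideal G = gen_ideal (F \<union> G)"
    have FsubG: "F \<subseteq> gen_ideal G" using gen_self[OF fFG] eq by blast
    have "TT \<sigma> G \<subseteq> TT \<sigma> F"
    proof
      fix x assume "x \<in> TT \<sigma> G"
      then have x: "x \<in> \<sigma>" "G \<subseteq> x" unfolding TT_def by auto
      have "gen_ideal G \<subseteq> x" using gen_ideal_sub[OF _ G x(2)] ids x(1) by blast
      then show "x \<in> TT \<sigma> F" using x FsubG unfolding TT_def by blast
    qed
    then show False using lt by blast
  qed
  show "(gen_ideal (F \<union> G), gen_ideal G) \<in> relG"
    unfolding relG_def Gens_def using sub ne fFG G by blast
qed

lemma wf_Bs:
  fixes \<sigma> :: "'a::comm_semiring_1 set set"
  assumes noeth: "noetherian_semiring TYPE('a)" and ids: "\<forall>x\<in>\<sigma>. semiring_ideal x"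
  shows "wf (relS (Bs \<sigma>))"
proof -
  have main: "\<forall>G. finite G \<longrightarrow> gen_ideal G = I \<longrightarrow> TT \<sigma> G \<in> Wellfounded.acc (relS (Bs \<sigma>))"
    for I :: "'a set"
    using wf_relG[OF noeth]
  proof (induction I rule: wf_induct_rule)
    case (less I)
    show ?case
    proof (intro allI impI)
      fix G :: "'a set" assume G: "finite G" "gen_ideal G = I"
      show "TT \<sigma> G \<in> Wellfounded.acc (relS (Bs \<sigma>))"
      proof (rule accI)
        fix Y assume "(Y, TT \<sigma> G) \<in> relS (Bs \<sigma>)"
        then have "Y \<in> Bs \<sigma>" and lt: "Y \<subset> TT \<sigma> G" unfolding relS_def by simp_all
        then obtain F where F: "finite F" "Y = TT \<sigma> F" unfolding Bs_def by blast
        have k1: "(gen_ideal (F \<union> G), I) \<in> relG" using TT_key(1)[OF ids F(1) G(1)] lt F G by simp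
        have k2: "TT \<sigma> (F \<union> G) = Y" using TT_key(2)[OF ids F(1) G(1)] lt F by simp
        have fin: "finite (F \<union> G)" using F G by simp
        have "TT \<sigma> (F \<union> G) \<in> Wellfounded.acc (relS (Bs \<sigma>))"
          using less.IH[OF k1] fin by blast
        then show "Y \<in> Wellfounded.acc (relS (Bs \<sigma>))" using k2 by simp
      qed
    qed
  qed
  show ?thesis
  proof (rule acc_wfI, intro allI)
    fix X
    show "X \<in> Wellfounded.acc (relS (Bs \<sigma>))"
    proof (cases "X \<in> Bs \<sigma>")
      case True
      then obtain G where "finite G" "X = TT \<sigma> G" unfolding Bs_def by blast
      then show ?thesis using main[of "gen_ideal G"] by simp
    next
      case False
      show ?thesis by (rule accI) (use False in \<open>auto simp: relS_def\<close>)
    qed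
  qed
qed

lemma up_set_TT:
  fixes \<sigma> :: "'a::comm_semiring_1 set set"
  assumes noeth: "noetherian_semiring TYPE('a)" and ids: "\<forall>x\<in>\<sigma>. semiring_ideal x"
    and a: "semiring_ideal a"
  shows "\<exists>F. finite F \<and> up_set \<sigma> a = TT \<sigma> F"
proof -
  obtain F where F: "finite F" "F \<subseteq> a" "a = gen_ideal F"
    using noeth a unfolding noetherian_semiring_def finitely_generated_ideal_def by blast
  have "up_set \<sigma> a = TT \<sigma> F"
  proof
    show "up_set \<sigma> a \<subseteq> TT \<sigma> F" using F(2) unfolding up_set_def TT_def by blast
    show "TT \<sigma> F \<subseteq> up_set \<sigma> a"
    proof
      fix x assume "x \<in> TT \<sigma> F"
      then have x: "x \<in> \<sigma>" "F \<subseteq> x" unfolding TT_def by auto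
      have "a \<subseteq> x" using gen_ideal_sub[OF _ F(1) x(2)] ids x(1) F(3) by blast
      then show "x \<in> up_set \<sigma> a" using x unfolding up_set_def by blast
    qed
  qed
  then show ?thesis using F(1) by blast
qed

lemma open_char:
  fixes \<sigma> :: "'a::comm_semiring_1 set set"
  assumes noeth: "noetherian_semiring TYPE('a)" and ids: "\<forall>x\<in>\<sigma>. semiring_ideal x"
    and U: "generate_topology_on (insert \<sigma> {\<sigma> - up_set \<sigma> a | a. semiring_ideal a}) U"
  shows "U \<subseteq> \<sigma> \<and> \<sigma> - U \<in> FU (Bs \<sigma>)"
  using U
proof (induction rule: generate_topology_on.induct)
  have BFU: "X \<in> Bs \<sigma> \<Longrightarrow> X \<in> FU (Bs \<sigma>)" for X unfolding FU_def
    by (rule CollectI, rule exI[of _ "{X}"]) simp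
  have sig: "\<sigma> \<in> FU (Bs \<sigma>)"
  proof -
    have "\<sigma> = TT \<sigma> {}" unfolding TT_def by simp
    then have "\<sigma> \<in> Bs \<sigma>" unfolding Bs_def by blast
    then show ?thesis by (rule BFU)
  qed
  {
    case Empty
    show ?case using sig by simp
  next
    case (Int a b)
    have "\<sigma> - (a \<inter> b) = (\<sigma> - a) \<union> (\<sigma> - b)" by blast
    then show ?case using Int FU_Un by auto
  next
    case (UN K)
    have s: "\<Union>K \<subseteq> \<sigma>" using UN by blast
    show ?case
    proof (cases "K = {}")
      case True then show ?thesis using sig by simp
    next
      case False
      have "\<sigma> - \<Union>K = \<Inter>((\<lambda>k. \<sigma> - k) ` K)" using False by blast
      moreover have "\<Inter>((\<lambda>k. \<sigma> - k) ` K) \<in> FU (Bs \<sigma>)"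
        by (rule FU_Inter[OF wf_FU[OF wf_Bs[OF noeth ids] Bs_Int] Bs_Int]) (use UN False in auto)
      ultimately show ?thesis using s by simp
    qed
  next
    case (Basis s)
    show ?case
    proof (cases "s = \<sigma>")
      case True
      have "{} \<in> FU (Bs \<sigma>)" unfolding FU_def by (rule CollectI, rule exI[of _ "{}"]) simp
      then show ?thesis using True by simp
    next
      case False
      then obtain a where a: "semiring_ideal a" "s = \<sigma> - up_set \<sigma> a" using Basis by blast
      obtain F where "finite F" "up_set \<sigma> a = TT \<sigma> F" using up_set_TT[OF noeth ids a(1)] by blast
      then have "up_set \<sigma> a \<in> Bs \<sigma>" unfolding Bs_def by blast
      moreover have "\<sigma> - s = up_set \<sigma> a" using a(2) unfolding up_set_def by blast
      ultimately show ?thesis using BFU a(2) by auto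
    qed
  }
qed

theorem corollary3p8:
  fixes \<sigma> :: "'a::comm_semiring_1 set set"
  assumes "noetherian_semiring TYPE('a)"
    and "\<forall>I\<in>\<sigma>. semiring_ideal I"
  shows "noetherian_space (ideal_topology \<sigma>)"
proof -
  note noeth = assms(1) and ids = assms(2)
  define S where "S = insert \<sigma> {\<sigma> - up_set \<sigma> a | a. semiring_ideal a}"
  have top: "topspace (ideal_topology \<sigma>) = \<sigma>"
    unfolding ideal_topology_def topology_generated_by_topspace by blast
  have closed: "C \<in> FU (Bs \<sigma>)" if "closedin (ideal_topology \<sigma>) C" for C
  proof -
    have C: "C \<subseteq> \<sigma>" "openin (ideal_topology \<sigma>) (\<sigma> - C)" using that top unfolding closedin_def by auto
    then have "generate_topology_on S (\<sigma> - C)"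
      unfolding ideal_topology_def S_def by (simp add: openin_topology_generated_by_iff)
    then have "\<sigma> - (\<sigma> - C) \<in> FU (Bs \<sigma>)" using open_char[OF noeth ids] unfolding S_def by blast
    moreover have "\<sigma> - (\<sigma> - C) = C" using C(1) by blast
    ultimately show ?thesis by simp
  qed
  have wfU: "wf (relS (FU (Bs \<sigma>)))" by (rule wf_FU[OF wf_Bs[OF noeth ids] Bs_Int])
  show ?thesis unfolding noetherian_space_def
  proof (intro allI impI)
    fix C :: "nat \<Rightarrow> 'a set set"
    assume h: "(\<forall>n. closedin (ideal_topology \<sigma>) (C n)) \<and> (\<forall>n. C (Suc n) \<subseteq> C n)"
    have CU: "C n \<in> FU (Bs \<sigma>)" for n using closed h by blast
    obtain z where z: "z \<in> range C" and zmin: "\<And>y. (y, z) \<in> relS (FU (Bs \<sigma>)) \<Longrightarrow> y \<notin> range C"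
      using wfE_min[OF wfU, of "C 0" "range C"] by blast
    obtain N where N: "z = C N" using z by blast
    have "C n = C N" if "n \<ge> N" for n
    proof -
      have "C n \<subseteq> C N" by (rule lift_Suc_antimono_le[of C, OF _ that]) (use h in blast)
      moreover have "\<not> C n \<subset> C N"
      proof
        assume "C n \<subset> C N"
        then have "(C n, z) \<in> relS (FU (Bs \<sigma>))" unfolding relS_def using CU N by simp
        then show False using zmin by blast
      qed
      ultimately show ?thesis by blast
    qed
    then show "\<exists>N. \<forall>n\<ge>N. C n = C N" by blast
  qed
qed

end
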